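(* Let $(\Gamma,\psi)$ be an $H$-asymptotic couple with asymptotic integration. Suppose $S\subseteq\Gamma$ is a nonempty convex set without a greatest element such that either $S\subseteq(\Gamma^{>})'$ or $S\subseteq(\Gamma^{<})'$, and $S$ has the derived yardstick property. Then $\int S:=\{\int\sigma:\sigma\in S\}\subseteq\Gamma$ is nonempty, convex, has no greatest element, and has the yardstick property.
   Context: An asymptotic couple is a pair $(\Gamma,\psi)$ with $\Gamma$ an ordered abelian group and $\psi:\Gamma\setminus\{0\}\to\Gamma$ such that for all nonzero $\alpha,\beta$: $\alpha+\beta\ne0\Rightarrow\psi(\alpha+\beta)\ge\min(\psi(\alpha),\psi(\beta))$; $\psi(k\alpha)=\psi(\alpha)$ for $k\in\mathbb{Z}\setminus\{0\}$; $\alpha>0\Rightarrow\alpha+\psi(\alpha)>\psi(\beta)$. It is $H$-asymptotic (of $H$-type) if $0<\alpha\le\beta\Rightarrow\psi(\alpha)\ge\psi(\beta)$. Write $\gamma'=\gamma+\psi(\gamma)$ for $\gamma\ne0$, $(\Gamma^{>})'=\{\gamma':\gamma>0\}$, $(\Gamma^{<})'=\{\gamma':\gamma<0\}$. Asymptotic integration: every $\alpha\in\Gamma$ equals $\gamma'$ for some $\gamma\ne0$; then such $\gamma$ is unique and is denoted $\int\alpha$. Define $s(\alpha)=\psi(\int\alpha)$, and the contraction $\chi(\alpha)=\int\psi(\alpha)$ for $\alpha\ne0$, $\chi(0)=0$. A nonempty convex $S\subseteq\Gamma$ without greatest element has the yardstick property if there is $\beta\in S$ with $\gamma-\chi(\gamma)\in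 S$ for all $\gamma\in S$, $\gamma>\beta$. A nonempty convex $S\subseteq\Gamma$ without greatest element with $S\subseteq(\Gamma^{>})'$ or $S\subseteq(\Gamma^{<})'$ has the derived yardstick property if there is $\beta\in S$ such that $\gamma-\int s(\gamma)\in S$ and $\gamma-\int s(\gamma)>\beta$ for every $\gamma\in S$ with $\gamma>\beta$. *)

theory Defs
  imports Main
begin

definition zmult :: "int \<Rightarrow> 'a::ab_group_add \<Rightarrow> 'a" where
  "zmult k a = (if k \<ge> 0 then (((+) a) ^^ nat k) 0 else - ((((+) a) ^^ nat (-k)) 0))"

text \<open>psi is a total function; only its values on nonzero elements matter.\<close>
definition asymptotic_couple :: "('a::linordered_ab_group_add \<Rightarrow> 'a) \<Rightarrow> bool" where
  "asymptotic_couple psi \<longleftrightarrow>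
     (\<forall>\<alpha> \<beta>. \<alpha> \<noteq> 0 \<and> \<beta> \<noteq> 0 \<and> \<alpha> + \<beta> \<noteq> 0 \<longrightarrow> psi (\<alpha> + \<beta>) \<ge> min (psi \<alpha>) (psi \<beta>)) \<and>
     (\<forall>\<alpha> k. \<alpha> \<noteq> 0 \<and> k \<noteq> 0 \<longrightarrow> psi (zmult k \<alpha>) = psi \<alpha>) \<and>
     (\<forall>\<alpha> \<beta>. \<alpha> > 0 \<and> \<beta> \<noteq> 0 \<longrightarrow> \<alpha> + psi \<alpha> > psi \<beta>)"

definition H_asymptotic :: "('a::linordered_ab_group_add \<Rightarrow> 'a) \<Rightarrow> bool" where
  "H_asymptotic psi \<longleftrightarrow> asymptotic_couple psi \<and>
     (\<forall>\<alpha> \<beta>. 0 < \<alpha> \<and> \<alpha> \<le> \<beta> \<longrightarrow> psi \<alpha> \<ge> psi \<beta>)"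

definition prime_ac :: "('a::linordered_ab_group_add \<Rightarrow> 'a) \<Rightarrow> 'a \<Rightarrow> 'a" where
  "prime_ac psi \<gamma> = \<gamma> + psi \<gamma>"

definition pos_primes :: "('a::linordered_ab_group_add \<Rightarrow> 'a) \<Rightarrow> 'a set" where
  "pos_primes psi = {prime_ac psi \<gamma> | \<gamma>. \<gamma> > 0}"

definition neg_primes :: "('a::linordered_ab_group_add \<Rightarrow> 'a) \<Rightarrow> 'a set" where
  "neg_primes psi = {prime_ac psi \<gamma> | \<gamma>. \<gamma> < 0}"

definition has_asymptotic_integration :: "('a::linordered_ab_group_add \<Rightarrow> 'a) \<Rightarrow> bool" where
  "has_asymptotic_integration psi \<longleftrightarrow> (\<forall>\<alpha>. \<exists>\<gamma>. \<gamma> \<noteq> 0 \<and> prime_ac psi \<gamma> = \<alpha>)"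

definition ac_integral :: "('a::linordered_ab_group_add \<Rightarrow> 'a) \<Rightarrow> 'a \<Rightarrow> 'a" where
  "ac_integral psi \<alpha> = (THE \<gamma>. \<gamma> \<noteq> 0 \<and> prime_ac psi \<gamma> = \<alpha>)"

definition ac_s :: "('a::linordered_ab_group_add \<Rightarrow> 'a) \<Rightarrow> 'a \<Rightarrow> 'a" where
  "ac_s psi \<alpha> = psi (ac_integral psi \<alpha>)"

definition ac_chi :: "('a::linordered_ab_group_add \<Rightarrow> 'a) \<Rightarrow> 'a \<Rightarrow> 'a" where
  "ac_chi psi \<alpha> = (if \<alpha> = 0 then 0 else ac_integral psi (psi \<alpha>))"

definition convex_set :: "'a::linorder set \<Rightarrow> bool" where
  "convex_set S \<longleftrightarrow> (\<forall>x y z. x \<in> S \<and> z \<in> S \<and> x \<le> y \<and> y \<le> z \<longrightarrow> y \<in> S)"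

definition no_greatest :: "'a::linorder set \<Rightarrow> bool" where
  "no_greatest S \<longleftrightarrow> (\<forall>x\<in>S. \<exists>y\<in>S. x < y)"

definition yardstick :: "('a::linordered_ab_group_add \<Rightarrow> 'a) \<Rightarrow> 'a set \<Rightarrow> bool" where
  "yardstick psi S \<longleftrightarrow> S \<noteq> {} \<and> convex_set S \<and> no_greatest S \<and>
     (\<exists>\<beta>\<in>S. \<forall>\<gamma>\<in>S. \<gamma> > \<beta> \<longrightarrow> \<gamma> - ac_chi psi \<gamma> \<in> S)"

definition derived_yardstick :: "('a::linordered_ab_group_add \<Rightarrow> 'a) \<Rightarrow> 'a set \<Rightarrow> bool" where
  "derived_yardstick psi S \<longleftrightarrow> S \<noteq> {} \<and> convex_set S \<and> no_greatest S \<and>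
     (S \<subseteq> pos_primes psi \<or> S \<subseteq> neg_primes psi) \<and>
     (\<exists>\<beta>\<in>S. \<forall>\<gamma>\<in>S. \<gamma> > \<beta> \<longrightarrow>
        \<gamma> - ac_integral psi (ac_s psi \<gamma>) \<in> S \<and> \<gamma> - ac_integral psi (ac_s psi \<gamma>) > \<beta>)"

end

theory Submission
  imports Defs
begin

lemma ac_facts:
  assumes "asymptotic_couple psi"
  shows ac1: "\<And>a b. a \<noteq> 0 \<Longrightarrow> b \<noteq> 0 \<Longrightarrow> a + b \<noteq> 0 \<Longrightarrow> psi (a + b) \<ge> min (psi a) (psi b)"
    and ac3: "\<And>a b. a > 0 \<Longrightarrow> b \<noteq> 0 \<Longrightarrow> a + psi a > psi b"
    and acneg: "\<And>a. a \<noteq> 0 \<Longrightarrow> psi (- a) = psi a"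
proof -
  show "\<And>a b. a \<noteq> 0 \<Longrightarrow> b \<noteq> 0 \<Longrightarrow> a + b \<noteq> 0 \<Longrightarrow> psi (a + b) \<ge> min (psi a) (psi b)"
    using assms unfolding asymptotic_couple_def by blast
  show "\<And>a b. a > 0 \<Longrightarrow> b \<noteq> 0 \<Longrightarrow> a + psi a > psi b"
    using assms unfolding asymptotic_couple_def by blast
  fix a :: 'a assume "a \<noteq> 0"
  moreover have "(-1::int) \<noteq> 0" by simp
  ultimately have "psi (zmult (-1) a) = psi a" using assms unfolding asymptotic_couple_def by blast
  moreover have "zmult (-1) a = - a" by (simp add: zmult_def)
  ultimately show "psi (- a) = psi a" by simp
qed

lemma prime_mono:
  fixes psi :: "'a::linordered_ab_group_add \<Rightarrow> 'a"
  assumes ac: "asymptotic_couple psi" and "a \<noteq> 0" "b \<noteq> 0" "a < b"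
  shows "prime_ac psi a < prime_ac psi b"
proof (cases "psi a \<le> psi b")
  case True
  then show ?thesis using \<open>a < b\<close> unfolding prime_ac_def by (simp add: add_less_le_mono)
next
  case False
  have d: "b - a > 0" using \<open>a < b\<close> by simp
  have "psi (a + (b - a)) \<ge> min (psi a) (psi (b - a))"
    using ac1[OF ac, of a "b - a"] assms d by simp
  then have "psi (b - a) \<le> psi b" using False by (simp add: min_def split: if_splits)
  moreover have "(b - a) + psi (b - a) > psi a" using ac3[OF ac d \<open>a \<noteq> 0\<close>] .
  ultimately have "(b - a) + psi b > psi a"
    by (meson add_le_cancel_left less_le_trans)
  then show ?thesis unfolding prime_ac_def by (simp add: algebra_simps)
qed

lemma prime_mono_le:
  fixes psi :: "'a::linordered_ab_group_add \<Rightarrow> 'a"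
  assumes ac: "asymptotic_couple psi" and "a \<noteq> 0" "b \<noteq> 0" "a \<le> b"
  shows "prime_ac psi a \<le> prime_ac psi b"
  using prime_mono[OF ac, of a b] assms by (cases "a = b") (auto simp: less_le)

lemma prime_inj:
  fixes psi :: "'a::linordered_ab_group_add \<Rightarrow> 'a"
  assumes ac: "asymptotic_couple psi" and "a \<noteq> 0" "b \<noteq> 0" "prime_ac psi a = prime_ac psi b"
  shows "a = b"
  using prime_mono[OF ac, of a b] prime_mono[OF ac, of b a] assms
  by (metis linorder_neqE order_less_irrefl)

lemma integral_unique:
  fixes psi :: "'a::linordered_ab_group_add \<Rightarrow> 'a"
  assumes ac: "asymptotic_couple psi" and "g \<noteq> 0" "prime_ac psi g = x"
  shows "ac_integral psi x = g"
  unfolding ac_integral_def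
  using assms prime_inj[OF ac] by (intro the_equality) auto

lemma integral_prop:
  fixes psi :: "'a::linordered_ab_group_add \<Rightarrow> 'a"
  assumes ac: "asymptotic_couple psi" and ai: "has_asymptotic_integration psi"
  shows "ac_integral psi x \<noteq> 0 \<and> prime_ac psi (ac_integral psi x) = x"
proof -
  obtain g where "g \<noteq> 0" "prime_ac psi g = x" using ai unfolding has_asymptotic_integration_def by blast
  then show ?thesis using integral_unique[OF ac] by auto
qed

lemma integral_mono:
  fixes psi :: "'a::linordered_ab_group_add \<Rightarrow> 'a"
  assumes ac: "asymptotic_couple psi" and ai: "has_asymptotic_integration psi" and "x < y"
  shows "ac_integral psi x < ac_integral psi y"
proof (rule ccontr)
  assume "\<not> ?thesis"
  then have "ac_integral psi y \<le> ac_integral psi x" by simp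
  then have "prime_ac psi (ac_integral psi y) \<le> prime_ac psi (ac_integral psi x)"
    using prime_mono_le[OF ac] integral_prop[OF ac ai] by blast
  then show False using integral_prop[OF ac ai, of x] integral_prop[OF ac ai, of y] \<open>x < y\<close> by simp
qed

lemma mem_image_iff:
  fixes psi :: "'a::linordered_ab_group_add \<Rightarrow> 'a"
  assumes ac: "asymptotic_couple psi" and ai: "has_asymptotic_integration psi" and "y \<noteq> 0"
  shows "y \<in> ac_integral psi ` S \<longleftrightarrow> prime_ac psi y \<in> S"
proof
  assume "y \<in> ac_integral psi ` S"
  then obtain s where "s \<in> S" "y = ac_integral psi s" by blast
  then show "prime_ac psi y \<in> S" using integral_prop[OF ac ai, of s] by simp
next
  assume "prime_ac psi y \<in> S"
  moreover have "ac_integral psi (prime_ac psi y) = y" using integral_unique[OF ac] assms by blast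
  ultimately show "y \<in> ac_integral psi ` S" by (metis image_eqI)
qed

theorem proposition3p19:
  fixes psi :: "'a::linordered_ab_group_add \<Rightarrow> 'a" and S :: "'a set"
  assumes "H_asymptotic psi"
    and "has_asymptotic_integration psi"
    and "S \<noteq> {}" and "convex_set S" and "no_greatest S"
    and "S \<subseteq> pos_primes psi \<or> S \<subseteq> neg_primes psi"
    and "derived_yardstick psi S"
  shows "ac_integral psi ` S \<noteq> {} \<and> convex_set (ac_integral psi ` S) \<and>
         no_greatest (ac_integral psi ` S) \<and> yardstick psi (ac_integral psi ` S)"
proof -
  have ac: "asymptotic_couple psi" and H: "\<And>a b. 0 < a \<Longrightarrow> a \<le> b \<Longrightarrow> psi a \<ge> psi b"
    using assms(1) unfolding H_asymptotic_def by auto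
  note ai = assms(2)
  define I where "I = ac_integral psi"
  note Ip = integral_prop[OF ac ai, folded I_def]
  note Im = integral_mono[OF ac ai, folded I_def]
  note Iu = integral_unique[OF ac, folded I_def]
  note memI = mem_image_iff[OF ac ai, folded I_def]
  have sign: "(\<forall>s\<in>S. I s > 0) \<or> (\<forall>s\<in>S. I s < 0)"
  proof (cases "S \<subseteq> pos_primes psi")
    case True
    have "I s > 0" if sS: "s \<in> S" for s
    proof -
      obtain g where "g > 0" "s = prime_ac psi g" using True sS unfolding pos_primes_def by blast
      then show ?thesis using Iu[of g s] by simp
    qed
    then show ?thesis by blast
  next
    case False
    then have N: "S \<subseteq> neg_primes psi" using assms(6) by blast
    have "I s < 0" if sS: "s \<in> S" for s
    proof -
      obtain g where "g < 0" "s = prime_ac psi g" using N sS unfolding neg_primes_def by blast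
      then show ?thesis using Iu[of g s] by simp
    qed
    then show ?thesis by blast
  qed
  have ne: "I ` S \<noteq> {}" using assms(3) by simp
  have cv: "convex_set (I ` S)"
    unfolding convex_set_def
  proof (intro allI impI)
    fix x y z assume h: "x \<in> I ` S \<and> z \<in> I ` S \<and> x \<le> y \<and> y \<le> z"
    then obtain a c where ac': "a \<in> S" "c \<in> S" "x = I a" "z = I c" by blast
    have y0: "y \<noteq> 0" using sign h ac' by fastforce
    have "prime_ac psi x \<le> prime_ac psi y" using prime_mono_le[OF ac] h y0 Ip ac' by blast
    moreover have "prime_ac psi y \<le> prime_ac psi z" using prime_mono_le[OF ac] h y0 Ip ac' by blast
    ultimately have "prime_ac psi y \<in> S" using assms(4) ac' Ip unfolding convex_set_def by metis
    then show "y \<in> I ` S" using memI y0 by blast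
  qed
  have ng: "no_greatest (I ` S)"
    unfolding no_greatest_def
  proof
    fix x assume "x \<in> I ` S"
    then obtain a where "a \<in> S" "x = I a" by blast
    then obtain b where "b \<in> S" "a < b" using assms(5) unfolding no_greatest_def by blast
    then show "\<exists>y\<in>I ` S. x < y" using Im \<open>x = I a\<close> by blast
  qed
  obtain \<beta> where b: "\<beta> \<in> S" and bp: "\<And>\<sigma>. \<sigma> \<in> S \<Longrightarrow> \<sigma> > \<beta> \<Longrightarrow>
        \<sigma> - I (ac_s psi \<sigma>) \<in> S"
    using assms(7) unfolding derived_yardstick_def I_def by blast
  have ys: "\<forall>\<gamma>\<in>I ` S. \<gamma> > I \<beta> \<longrightarrow> \<gamma> - ac_chi psi \<gamma> \<in> I ` S"
  proof (intro ballI impI)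
    fix g assume gS: "g \<in> I ` S" and gb: "g > I \<beta>"
    then obtain \<sigma> where s: "\<sigma> \<in> S" "g = I \<sigma>" by blast
    have sb: "\<sigma> > \<beta>" using gb s
      by (metis Im linorder_neqE order_less_asym)
    have g0: "g \<noteq> 0" using Ip[of \<sigma>] s by simp
    have sg: "\<sigma> = g + psi g" using Ip s unfolding prime_ac_def by metis
    define d where "d = I (psi g)"
    have chi: "ac_chi psi g = d" using g0 unfolding ac_chi_def d_def I_def by simp
    have sd: "\<sigma> - d \<in> S" using bp[OF s(1) sb] s unfolding ac_s_def d_def I_def by simp
    have d0: "d \<noteq> 0" and dp: "d + psi d = psi g" using Ip[of "psi g"] unfolding d_def prime_ac_def by auto
    show "g - ac_chi psi g \<in> I ` S"
    proof (cases "g > 0")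
      case True
      have "psi g < g + psi g" using ac3[OF ac True g0] .
      then have "prime_ac psi d < prime_ac psi g" using dp unfolding prime_ac_def by simp
      then have dg: "d < g" using prime_mono_le[OF ac g0 d0] by (meson not_le)
      have dneg: "d < 0"
      proof (rule ccontr)
        assume "\<not> d < 0"
        then have "d > 0" using d0 by simp
        then have "psi d \<ge> psi g" using H dg by simp
        moreover have "d = psi g - psi d" using dp by (simp add: eq_diff_eq)
        moreover from calculation(1) have "psi g - psi d \<le> 0" by (simp add: diff_le_0_iff_le)
        ultimately have "d \<le> 0" by simp
        then show False using \<open>d > 0\<close> by simp
      qed
      have gd0: "g - d > g" using dneg by simp
      then have gdne: "g - d \<noteq> 0" using True by simp
      have "prime_ac psi g < prime_ac psi (g - d)" using prime_mono[OF ac g0 gdne gd0] .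
      then have lo: "\<sigma> \<le> prime_ac psi (g - d)" using sg unfolding prime_ac_def by simp
      have "psi (g - d) \<le> psi g" using H[OF True] gd0 by simp
      then have hi: "prime_ac psi (g - d) \<le> \<sigma> - d" using sg unfolding prime_ac_def
        by (simp add: algebra_simps)
      have "prime_ac psi (g - d) \<in> S" using assms(4) s(1) sd lo hi unfolding convex_set_def by blast
      then show ?thesis using memI gdne chi by simp
    next
      case False
      then have gn: "g < 0" using g0 by simp
      have dn: "d < 0"
      proof (rule ccontr)
        assume "\<not> d < 0"
        then have "d > 0" using d0 by simp
        then have "d + psi d > psi g" using ac3[OF ac _ g0] by blast
        then show False using dp by simp
      qed
      have "d = psi g - psi d" using dp by (simp add: eq_diff_eq)
      then have "psi g - psi d < 0" using dn by simp
      then have ba: "psi d > psi g" by (simp add: diff_less_0_iff_less)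
      have gdne: "g - d \<noteq> 0" using ba by auto
      have e1: "psi ((g - d) + d) \<ge> min (psi (g - d)) (psi d)"
        using ac1[OF ac gdne d0] g0 by simp
      have e2: "psi (g + - d) \<ge> min (psi g) (psi (- d))"
        using ac1[OF ac g0, of "- d"] d0 gdne by simp
      have "psi (- d) = psi d" using acneg[OF ac d0] .
      then have "psi (g - d) \<ge> psi g" using e2 ba by (simp add: min_def split: if_splits)
      moreover have "psi (g - d) \<le> psi g" using e1 ba by (simp add: min_def split: if_splits)
      ultimately have "psi (g - d) = psi g" by simp
      then have "prime_ac psi (g - d) = \<sigma> - d" using sg unfolding prime_ac_def by (simp add: algebra_simps)
      then show ?thesis using memI gdne chi sd by simp
    qed
  qed
  have "yardstick psi (I ` S)"
    unfolding yardstick_def using ne cv ng ys b by blast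
  then show ?thesis using ne cv ng unfolding I_def by simp
qed

end
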